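(* Let $\mathcal{F}$ be a set of reductions. The following are equivalent: (i) for every family $\{f_k:k\in\omega\}\subseteq\mathcal{F}$, the function $\overline{\bigoplus}_k f_k$ belongs to $\mathcal{F}$; (ii) for every family $\{f_k:k\in\omega\}\subseteq\mathcal{F}$, the function $\bigcup_k(f_k\restriction\mathbf{N}_{\langle k\rangle})$ belongs to $\mathcal{F}$, and $\mathsf{Lip}\subseteq\mathcal{F}$.
   Context: $\mathbb{R}={}^\omega\omega$ with metric $d(x,y)=2^{-n}$, $n$ least with $x(n)\neq y(n)$ ($d(x,x)=0$); $\mathbf{N}_s=\{x:s\subseteq x\}$. For $C>0$, $\mathsf{Lip}(C)$ is the set of $f:\mathbb{R}\to\mathbb{R}$ with $d(f(x),f(y))\le C\,d(x,y)$; $\mathsf{Lip}=\bigcup_{k\in\mathbb{Z}}\mathsf{Lip}(2^k)$ and $\mathsf{L}=\mathsf{Lip}(1)$. A set of reductions is a set $\mathcal{F}$ of functions $\mathbb{R}\to\mathbb{R}$ closed under composition, with $\mathsf{L}\subseteq\mathcal{F}$, admitting a surjection $\mathbb{R}\twoheadrightarrow\mathcal{F}$. For $x\in\mathbb{R}$, $x^-=\langle x(n+1):n\in\omega\rangle$, and $\overline{\bigoplus}_k f_k(x)=f_{x(0)}(x^-)$. $\bigcup_k(f_k\restriction\mathbf{N}_{\langle k\rangle})$ is the function agreeing with $f_k$ on $\mathbf{N}_{\langle k\rangle}$ for each $k$. *)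

theory Defs
  imports Complex_Main
begin

type_synonym baire = "nat \<Rightarrow> nat"

definition bdist :: "baire \<Rightarrow> baire \<Rightarrow> real" where
  "bdist x y = (if x = y then 0 else (1/2) ^ (LEAST n. x n \<noteq> y n))"

definition Lip_C :: "real \<Rightarrow> (baire \<Rightarrow> baire) set" where
  "Lip_C C = {f. \<forall>x y. bdist (f x) (f y) \<le> C * bdist x y}"

definition Lip :: "(baire \<Rightarrow> baire) set" where
  "Lip = (\<Union>k::int. Lip_C (2 powi k))"

definition Lip1 :: "(baire \<Rightarrow> baire) set" where
  "Lip1 = Lip_C 1"

definition set_of_reductions :: "(baire \<Rightarrow> baire) set \<Rightarrow> bool" where
  "set_of_reductions F \<longleftrightarrow>
     (\<forall>f\<in>F. \<forall>g\<in>F. f \<circ> g \<in> F) \<and> Lip1 \<subseteq> F \<and> (\<exists>h::baire \<Rightarrow> (baire \<Rightarrow> baire). range h = F)"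

definition tail :: "baire \<Rightarrow> baire" where
  "tail x = (\<lambda>n. x (Suc n))"

definition glued_sum :: "(nat \<Rightarrow> baire \<Rightarrow> baire) \<Rightarrow> baire \<Rightarrow> baire" where
  "glued_sum f = (\<lambda>x. f (x 0) (tail x))"

text \<open>The function agreeing with f k on N_<k>, for each k.\<close>
definition piecewise_union :: "(nat \<Rightarrow> baire \<Rightarrow> baire) \<Rightarrow> baire \<Rightarrow> baire" where
  "piecewise_union f = (\<lambda>x. f (x 0) x)"

end

theory Submission
  imports Defs
begin

definition bcons :: "nat \<Rightarrow> baire \<Rightarrow> baire" where
  "bcons k y = (\<lambda>n. case n of 0 \<Rightarrow> k | Suc m \<Rightarrow> y m)"

lemma bdist_nonneg: "bdist x y \<ge> 0"
  by (simp add: bdist_def)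

lemma bdist_le1: "bdist x y \<le> 1"
  by (simp add: bdist_def power_le_one)

lemma bdist_bcons: "bdist (bcons k y) (bcons k y') = (1/2) * bdist y y'"
proof (cases "y = y'")
  case True then show ?thesis by (simp add: bdist_def)
next
  case False
  then obtain m where m: "y m \<noteq> y' m" by auto
  have ne: "bcons k y \<noteq> bcons k y'"
  proof
    assume "bcons k y = bcons k y'"
    hence "bcons k y (Suc m) = bcons k y' (Suc m)" by simp
    with m show False by (simp add: bcons_def)
  qed
  have "(LEAST n. bcons k y n \<noteq> bcons k y' n) = Suc (LEAST n. bcons k y (Suc n) \<noteq> bcons k y' (Suc n))"
    by (rule Least_Suc[of _ "Suc m"]) (use m in \<open>auto simp: bcons_def\<close>)
  then show ?thesis using ne False by (simp add: bdist_def bcons_def)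
qed

lemma bcons_tail: "bcons (x 0) (tail x) = x"
  by (rule ext) (simp add: bcons_def tail_def split: nat.split)

lemma tail_bcons: "tail (bcons k y) = y"
  by (simp add: bcons_def tail_def)

lemma bcons_Lip1: "bcons k \<in> Lip1"
  by (auto simp: Lip1_def Lip_C_def bdist_bcons bdist_nonneg)

lemma tail_Lip: "tail \<in> Lip_C 2"
  unfolding Lip_C_def
proof (intro CollectI allI)
  fix x y
  show "bdist (tail x) (tail y) \<le> 2 * bdist x y"
  proof (cases "x 0 = y 0")
    case True
    have "bdist x y = (1/2) * bdist (tail x) (tail y)"
      using bdist_bcons[of "x 0" "tail x" "tail y"] True bcons_tail[of x] bcons_tail[of y] by simp
    then show ?thesis by simp
  next
    case False
    hence "x \<noteq> y" by auto
    have "(LEAST n. x n \<noteq> y n) = 0" using False by (intro Least_eq_0) auto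
    hence "bdist x y = 1" using \<open>x \<noteq> y\<close> by (simp add: bdist_def)
    then show ?thesis using bdist_le1[of "tail x" "tail y"] by simp
  qed
qed

lemma Lip_C_mono: "C \<le> D \<Longrightarrow> Lip_C C \<subseteq> Lip_C D"
  unfolding Lip_C_def
  by (auto intro: order_trans[OF _ mult_right_mono[OF _ bdist_nonneg]])

lemma glued_bcons: "glued_sum (\<lambda>j y. f (bcons j y)) = f"
  by (rule ext) (simp add: glued_sum_def bcons_tail)

lemma Lip_pow_in:
  assumes G: "\<forall>f :: nat \<Rightarrow> baire \<Rightarrow> baire. (\<forall>k. f k \<in> F) \<longrightarrow> glued_sum f \<in> F"
    and L: "Lip1 \<subseteq> F"
  shows "Lip_C (2 ^ n) \<subseteq> F"
proof (induction n)
  case 0 then show ?case using L by (simp add: Lip1_def)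
next
  case (Suc n)
  show ?case
  proof
    fix f assume f: "f \<in> Lip_C (2 ^ Suc n)"
    have "(\<lambda>y. f (bcons j y)) \<in> Lip_C (2 ^ n)" for j
      using f unfolding Lip_C_def
    proof (intro CollectI allI)
      fix y y'
      assume "f \<in> {f. \<forall>x y. bdist (f x) (f y) \<le> 2 ^ Suc n * bdist x y}"
      hence "bdist (f (bcons j y)) (f (bcons j y')) \<le> 2 ^ Suc n * bdist (bcons j y) (bcons j y')"
        by simp
      then show "bdist (f (bcons j y)) (f (bcons j y')) \<le> 2 ^ n * bdist y y'"
        by (simp add: bdist_bcons)
    qed
    hence "(\<lambda>y. f (bcons j y)) \<in> F" for j using Suc by blast
    hence "glued_sum (\<lambda>j y. f (bcons j y)) \<in> F" using G by (metis (no_types))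
    then show "f \<in> F" by (simp add: glued_bcons)
  qed
qed

theorem proposition4p1:
  fixes F :: "(baire \<Rightarrow> baire) set"
  assumes "set_of_reductions F"
  shows "(\<forall>f :: nat \<Rightarrow> baire \<Rightarrow> baire. (\<forall>k. f k \<in> F) \<longrightarrow> glued_sum f \<in> F)
     \<longleftrightarrow> ((\<forall>f :: nat \<Rightarrow> baire \<Rightarrow> baire. (\<forall>k. f k \<in> F) \<longrightarrow> piecewise_union f \<in> F) \<and> Lip \<subseteq> F)"
proof -
  have comp: "\<And>f g. f \<in> F \<Longrightarrow> g \<in> F \<Longrightarrow> f \<circ> g \<in> F"
    and L: "Lip1 \<subseteq> F" using assms by (auto simp: set_of_reductions_def)
  show ?thesis
  proof
    assume G: "\<forall>f :: nat \<Rightarrow> baire \<Rightarrow> baire. (\<forall>k. f k \<in> F) \<longrightarrow> glued_sum f \<in> F"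
    have P: "piecewise_union f \<in> F" if "\<forall>k. f k \<in> F" for f
    proof -
      have "\<forall>k. f k \<circ> bcons k \<in> F" using that comp L bcons_Lip1 by blast
      hence "glued_sum (\<lambda>k. f k \<circ> bcons k) \<in> F" using G[rule_format, of "\<lambda>k. f k \<circ> bcons k"] by simp
      moreover have "glued_sum (\<lambda>k. f k \<circ> bcons k) = piecewise_union f"
        by (rule ext) (simp add: glued_sum_def piecewise_union_def bcons_tail)
      ultimately show ?thesis by simp
    qed
    have "Lip_C (2 powi k) \<subseteq> F" for k :: int
    proof (cases "k \<ge> 0")
      case True
      then have "2 powi k = (2::real) ^ nat k"
        by (metis int_nat_eq power_int_of_nat)
      then show ?thesis using Lip_pow_in[OF G L] by simp
    next
      case False
      then have "2 powi k \<le> (1::real)"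
      proof -
        obtain m where "k = - int m" using False by (metis less_le_not_le minus_minus nat_0_le neg_0_le_iff_le not_le nat_eq_iff)
        then show ?thesis by (simp add: power_int_minus power_int_of_nat inverse_le_1_iff)
      qed
      then show ?thesis using Lip_C_mono L by (auto simp: Lip1_def)
    qed
    then show "(\<forall>f :: nat \<Rightarrow> baire \<Rightarrow> baire. (\<forall>k. f k \<in> F) \<longrightarrow> piecewise_union f \<in> F) \<and> Lip \<subseteq> F"
      using P by (auto simp: Lip_def)
  next
    assume H: "(\<forall>f :: nat \<Rightarrow> baire \<Rightarrow> baire. (\<forall>k. f k \<in> F) \<longrightarrow> piecewise_union f \<in> F) \<and> Lip \<subseteq> F"
    have T: "tail \<in> F"
    proof -
      have "tail \<in> Lip_C (2 powi (1::int))" using tail_Lip by (simp add: power_int_def)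
      then have "tail \<in> Lip" unfolding Lip_def by blast
      then show ?thesis using H by blast
    qed
    show "\<forall>f :: nat \<Rightarrow> baire \<Rightarrow> baire. (\<forall>k. f k \<in> F) \<longrightarrow> glued_sum f \<in> F"
    proof (intro allI impI)
      fix f :: "nat \<Rightarrow> baire \<Rightarrow> baire" assume "\<forall>k. f k \<in> F"
      hence "\<forall>k. f k \<circ> tail \<in> F" using comp T by blast
      hence "piecewise_union (\<lambda>k. f k \<circ> tail) \<in> F" using H[THEN conjunct1, rule_format, of "\<lambda>k. f k \<circ> tail"] by simp
      moreover have "piecewise_union (\<lambda>k. f k \<circ> tail) = glued_sum f"
        by (rule ext) (simp add: glued_sum_def piecewise_union_def)
      ultimately show "glued_sum f \<in> F" by simp
    qed
  qed
qed

end
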